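(* Let $G=(V,E;w)$ be a finite simple graph with positive edge weights. The matching game $\Gamma_G$ is population monotonic if and only if every connected component of $G$ with at least two vertices is a double-star whose two centers $u,v$ (for a suitable choice of the double-star decomposition) form a dominant pair.
   Context: $G=(V,E;w)$ is a finite simple graph with edge weights $w:E\to\mathbb{R}$, $w_e>0$ for all $e\in E$; $w_{ij}$ is the weight of edge $ij$. The matching game on $G$ is the cooperative game $\Gamma_G=(N,\gamma)$ with $N=V$ and $\gamma(S)$ the maximum weight of a matching in $G[S]$ ($\gamma(\emptyset)=0$). A population monotonic allocation scheme (PMAS) is a family $(\boldsymbol{x}_S)_{\emptyset\neq S\subseteq N}$, $\boldsymbol{x}_S=(x_{S,i})_{i\in S}\in\mathbb{R}^S$, with (efficiency) $\sum_{i\in S}x_{S,i}=\gamma(S)$ for all nonempty $S$ and (monotonicity) $x_{S,i}\le x_{T,i}$ whenever $\emptyset\ne S\subseteq T\subseteq N$, $i\in S$; $\Gamma_G$ is population monotonic if it admits a PMAS. A double-star is a graph whose vertex set is partitioned into a set $K=\{u,v\}$ of two adjacent vertices (the centers) and an independent set $I$, such that every vertex of $I$ is adjacent to at least one of $u,v$ (so all edges lie within $K$ or between $K$ and $I$; a star with at least one edge is a double-star, taking as centers the star's center and one leaf). Adjacent vertices $u,v$ form a dominant pair if $w_{uv}\ge w_{uu'}+w_{vv'}$ for all edges $uu'\ne uv$ and $vv'\ne uv$ (with $u'=v'$ allowed), and moreover, if one of them, say $v$, has no incident edge other than $uv$, then $w_{uv}\ge w_{uu'}$ for every edge $uu'\ne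 uv$; equivalently, $w_{uv}\ge\sigma_u+\sigma_v$ where $\sigma_u$ (resp. $\sigma_v$) is the maximum weight of an edge other than $uv$ incident to $u$ (resp. $v$), or $0$ if none exists. *)

theory Defs
  imports Complex_Main
begin

definition simple_graph :: "'a set \<Rightarrow> 'a set set \<Rightarrow> bool" where
  "simple_graph V E \<longleftrightarrow> finite V \<and>
     (\<forall>e\<in>E. \<exists>a b. a \<noteq> b \<and> a \<in> V \<and> b \<in> V \<and> e = {a, b})"

definition matching_in :: "'a set set \<Rightarrow> 'a set \<Rightarrow> 'a set set \<Rightarrow> bool" where
  "matching_in E S M \<longleftrightarrow> M \<subseteq> E \<and> (\<forall>e\<in>M. e \<subseteq> S) \<and>
     (\<forall>e\<in>M. \<forall>f\<in>M. e \<noteq> f \<longrightarrow> e \<inter> f = {})"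

definition gamma :: "'a set set \<Rightarrow> ('a set \<Rightarrow> real) \<Rightarrow> 'a set \<Rightarrow> real" where
  "gamma E w S = Max ((\<lambda>M. sum w M) ` {M. matching_in E S M})"

definition is_PMAS :: "'a set \<Rightarrow> 'a set set \<Rightarrow> ('a set \<Rightarrow> real) \<Rightarrow> ('a set \<Rightarrow> 'a \<Rightarrow> real) \<Rightarrow> bool" where
  "is_PMAS V E w x \<longleftrightarrow>
     (\<forall>S. S \<noteq> {} \<and> S \<subseteq> V \<longrightarrow> (\<Sum>i\<in>S. x S i) = gamma E w S) \<and>
     (\<forall>S T i. S \<noteq> {} \<and> S \<subseteq> T \<and> T \<subseteq> V \<and> i \<in> S \<longrightarrow> x S i \<le> x T i)"

definition population_monotonic :: "'a set \<Rightarrow> 'a set set \<Rightarrow> ('a set \<Rightarrow> real) \<Rightarrow> bool" where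
  "population_monotonic V E w \<longleftrightarrow> (\<exists>x. is_PMAS V E w x)"

definition adj :: "'a set set \<Rightarrow> 'a \<Rightarrow> 'a \<Rightarrow> bool" where
  "adj E a b \<longleftrightarrow> {a, b} \<in> E"

definition component :: "'a set set \<Rightarrow> 'a \<Rightarrow> 'a set" where
  "component E v = {u. (adj E)\<^sup>*\<^sup>* v u}"

definition components :: "'a set \<Rightarrow> 'a set set \<Rightarrow> 'a set set" where
  "components V E = component E ` V"

text \<open>The subgraph induced by C is a double-star with adjacent centers u, v:
  C - {u,v} is independent and every vertex of it is adjacent to u or v.\<close>
definition double_star_centers :: "'a set set \<Rightarrow> 'a set \<Rightarrow> 'a \<Rightarrow> 'a \<Rightarrow> bool" where
  "double_star_centers E C u v \<longleftrightarrow> u \<in> C \<and> v \<in> C \<and> u \<noteq> v \<and> {u, v} \<in> E \<and>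
     (\<forall>e\<in>E. e \<subseteq> C \<longrightarrow> u \<in> e \<or> v \<in> e) \<and>
     (\<forall>i\<in>C - {u, v}. {u, i} \<in> E \<or> {v, i} \<in> E)"

definition dominant_pair :: "'a set set \<Rightarrow> ('a set \<Rightarrow> real) \<Rightarrow> 'a \<Rightarrow> 'a \<Rightarrow> bool" where
  "dominant_pair E w u v \<longleftrightarrow> {u, v} \<in> E \<and>
     (\<forall>u' v'. {u, u'} \<in> E \<and> {u, u'} \<noteq> {u, v} \<and> {v, v'} \<in> E \<and> {v, v'} \<noteq> {u, v} \<longrightarrow>
        w {u, v} \<ge> w {u, u'} + w {v, v'}) \<and>
     ((\<forall>v'. {v, v'} \<in> E \<longrightarrow> {v, v'} = {u, v}) \<longrightarrow>
        (\<forall>u'. {u, u'} \<in> E \<and> {u, u'} \<noteq> {u, v} \<longrightarrow> w {u, v} \<ge> w {u, u'})) \<and>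
     ((\<forall>u'. {u, u'} \<in> E \<longrightarrow> {u, u'} = {u, v}) \<longrightarrow>
        (\<forall>v'. {v, v'} \<in> E \<and> {v, v'} \<noteq> {u, v} \<longrightarrow> w {u, v} \<ge> w {v, v'}))"

end

theory Submission imports Defs begin

locale mg =
  fixes V :: "'a set" and E :: "'a set set" and w :: "'a set \<Rightarrow> real"
  assumes sg: "simple_graph V E" and wpos: "\<forall>e\<in>E. w e > 0"
begin

lemma edgeE:
  assumes "e \<in> E" obtains a b where "a\<noteq>b" "a\<in>V" "b\<in>V" "e={a,b}"
  using sg assms unfolding simple_graph_def by blast

lemma finV: "finite V" using sg simple_graph_def by blast

lemma EsubV: "e \<in> E \<Longrightarrow> e \<subseteq> V" by (erule edgeE) auto

lemma finE: "finite E"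
proof -
  have "E \<subseteq> Pow V" using EsubV by blast
  thus ?thesis using finV finite_subset by blast
qed

lemma edge_V: "{a,b} \<in> E \<Longrightarrow> a \<in> V \<and> b \<in> V" using EsubV by blast

lemma edge_ne: "{a,b} \<in> E \<Longrightarrow> a \<noteq> b"
  by (erule edgeE) (auto simp: doubleton_eq_iff)

lemma wp: "e \<in> E \<Longrightarrow> w e > 0" using wpos by blast

lemma fin_match: "finite {M. matching_in E S M}"
proof -
  have "{M. matching_in E S M} \<subseteq> Pow E" by (auto simp: matching_in_def)
  thus ?thesis using finE finite_subset by blast
qed

lemma match_empty: "matching_in E S {}" by (simp add: matching_in_def)

lemma gamma_ge: "matching_in E S M \<Longrightarrow> sum w M \<le> gamma E w S"
  unfolding gamma_def using fin_match by (intro Max_ge) auto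

lemma gamma_le: "(\<And>M. matching_in E S M \<Longrightarrow> sum w M \<le> c) \<Longrightarrow> gamma E w S \<le> c"
  unfolding gamma_def using fin_match match_empty by (subst Max_le_iff) auto

lemma gamma_edge: "e \<in> E \<Longrightarrow> e \<subseteq> S \<Longrightarrow> w e \<le> gamma E w S"
  using gamma_ge[of S "{e}"] by (simp add: matching_in_def)

lemma gamma_nonneg: "0 \<le> gamma E w S"
  using gamma_ge[OF match_empty] by simp

lemma gamma3:
  assumes "finite T" "card T \<le> 3" "\<And>e. e \<in> E \<Longrightarrow> e \<subseteq> T \<Longrightarrow> w e \<le> m" "0 \<le> m"
  shows "gamma E w T \<le> m"
proof (rule gamma_le)
  fix M assume M: "matching_in E T M"
  show "sum w M \<le> m"
  proof (cases "M = {}")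
    case True thus ?thesis using assms by simp
  next
    case False
    then obtain e where e: "e \<in> M" by blast
    have "M = {e}"
    proof (rule ccontr)
      assume "M \<noteq> {e}"
      then obtain f where f: "f \<in> M" "f \<noteq> e" using e by blast
      have d: "e \<inter> f = {}" using M e f unfolding matching_in_def by blast
      have eE: "e \<in> E" "f \<in> E" "e \<subseteq> T" "f \<subseteq> T" using M e f unfolding matching_in_def by auto
      have ce: "card e = 2" using eE(1) by (rule edgeE) auto
      have cf: "card f = 2" using eE(2) by (rule edgeE) auto
      have "card (e \<union> f) = 4" using ce cf d card_Un_disjoint[of e f]
        by (metis add_2_eq_Suc' card.infinite numeral_Bit0 numeral_eq_Suc one_plus_numeral semiring_norm(2) zero_neq_numeral eval_nat_numeral(2))
      moreover have "card (e \<union> f) \<le> card T" using eE assms(1) by (intro card_mono) auto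
      ultimately show False using assms(2) by simp
    qed
    thus ?thesis using e M assms(3) unfolding matching_in_def by auto
  qed
qed

lemma sub3: "e \<in> E \<Longrightarrow> e \<subseteq> {p,q,r} \<Longrightarrow> e = {p,q} \<or> e = {q,r} \<or> e = {p,r}"
  by (erule edgeE) (auto simp: insert_commute)


context fixes x assumes px: "is_PMAS V E w x"
begin

lemma eff: "S \<noteq> {} \<Longrightarrow> S \<subseteq> V \<Longrightarrow> (\<Sum>i\<in>S. x S i) = gamma E w S"
  using px unfolding is_PMAS_def by blast

lemma mon: "S \<noteq> {} \<Longrightarrow> S \<subseteq> T \<Longrightarrow> T \<subseteq> V \<Longrightarrow> i \<in> S \<Longrightarrow> x S i \<le> x T i"
  using px unfolding is_PMAS_def by blast

lemma core2:
  assumes "{a,b} \<in> E" "{a,b} \<subseteq> T" "T \<subseteq> V"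
  shows "w {a,b} \<le> x T a + x T b"
proof -
  have ab: "a \<noteq> b" using edge_ne assms(1) .
  have "x {a,b} a + x {a,b} b = gamma E w {a,b}" using eff[of "{a,b}"] ab assms by auto
  moreover have "w {a,b} \<le> gamma E w {a,b}" using gamma_edge assms(1) by blast
  moreover have "x {a,b} a \<le> x T a" "x {a,b} b \<le> x T b" using mon[of "{a,b}" T] assms by auto
  ultimately show ?thesis by linarith
qed

lemma path:
  assumes "distinct [p,q,r,s]" "{p,q}\<in>E" "{q,r}\<in>E" "{r,s}\<in>E"
  shows "w{p,q}+w{q,r}+w{r,s} \<le> gamma E w {p,q,r} + gamma E w {q,r,s}"
proof -
  have V: "p \<in> V" "q \<in> V" "r \<in> V" "s \<in> V" using edge_V assms by blast+
  have e1: "x {p,q,r} p + x {p,q,r} q + x {p,q,r} r = gamma E w {p,q,r}"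
    using eff[of "{p,q,r}"] V assms(1) by (simp add: add.assoc)
  have e2: "x {q,r,s} q + x {q,r,s} r + x {q,r,s} s = gamma E w {q,r,s}"
    using eff[of "{q,r,s}"] V assms(1) by (simp add: add.assoc)
  have c1: "w {p,q} \<le> x {p,q,r} p + x {p,q,r} q" using core2[of p q "{p,q,r}"] V assms by auto
  have c2: "w {r,s} \<le> x {q,r,s} r + x {q,r,s} s" using core2[of r s "{q,r,s}"] V assms by auto
  have c3: "w {q,r} \<le> x {q,r} q + x {q,r} r" using core2[of q r "{q,r}"] V assms by auto
  have m1: "x {q,r} r \<le> x {p,q,r} r" using mon[of "{q,r}" "{p,q,r}" r] V by auto
  have m2: "x {q,r} q \<le> x {q,r,s} q" using mon[of "{q,r}" "{q,r,s}" q] V by auto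
  show ?thesis using e1 e2 c1 c2 c3 m1 m2 by linarith
qed

lemma tri:
  assumes "{p,q}\<in>E" "{q,r}\<in>E" "{p,r}\<in>E"
  shows "w{p,q}+w{q,r}+w{p,r} \<le> 2 * gamma E w {p,q,r}"
proof -
  have V: "p \<in> V" "q \<in> V" "r \<in> V" using edge_V assms by blast+
  have d: "distinct [p,q,r]" using edge_ne assms by auto
  have e1: "x {p,q,r} p + x {p,q,r} q + x {p,q,r} r = gamma E w {p,q,r}"
    using eff[of "{p,q,r}"] V d by (simp add: add.assoc)
  have c1: "w {p,q} \<le> x {p,q,r} p + x {p,q,r} q" using core2[of p q "{p,q,r}"] V assms by auto
  have c2: "w {q,r} \<le> x {p,q,r} q + x {p,q,r} r" using core2[of q r "{p,q,r}"] V assms by auto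
  have c3: "w {p,r} \<le> x {p,q,r} p + x {p,q,r} r" using core2[of p r "{p,q,r}"] V assms by auto
  show ?thesis using e1 c1 c2 c3 by linarith
qed


lemma K:
  assumes uv: "{u,v} \<in> E" and Cmax: "\<And>e. e\<in>E \<Longrightarrow> e \<subseteq> C \<Longrightarrow> w e \<le> w{u,v}"
  and inC: "u \<in> C" "v \<in> C" "a \<in> C" "b \<in> C"
  and a: "a \<notin> {u,v}" and ua: "{u,a} \<in> E" and ab: "{a,b} \<in> E"
  shows "b \<in> {u,v}"
proof (rule ccontr)
  assume b: "b \<notin> {u,v}"
  have "u \<noteq> v" "a \<noteq> b" using edge_ne uv ab by auto
  hence d1: "distinct [v,u,a,b]" "distinct [v,u,b,a]" using a b by auto
  have vu: "{v,u} \<in> E" using uv by (simp add: insert_commute)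
  have g1: "gamma E w {v,u,a} \<le> w{u,v}"
    by (rule gamma3) (use Cmax inC wp[OF uv] in \<open>auto simp: card_insert_if\<close>)
  have p1: "w{v,u}+w{u,a}+w{a,b} \<le> gamma E w {v,u,a} + gamma E w {u,a,b}"
    using path[OF d1(1) vu ua ab] .
  have pa: "w{u,a} > 0" "w{a,b} > 0" using wp ua ab by auto
  show False
  proof (cases "{u,b} \<in> E")
    case True
    define m where "m = max (w{u,a}) (max (w{a,b}) (w{u,b}))"
    have pb: "w{u,b} > 0" using wp True by auto
    have g2: "gamma E w {u,a,b} \<le> m"
    proof (rule gamma3)
      fix e assume "e \<in> E" "e \<subseteq> {u,a,b}"
      hence "e = {u,a} \<or> e = {a,b} \<or> e = {u,b}" using sub3 by blast
      thus "w e \<le> m" unfolding m_def by auto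
    qed (use pa in \<open>auto simp: card_insert_if m_def max_def\<close>)
    have g3: "gamma E w {v,u,b} \<le> w{u,v}"
      by (rule gamma3) (use Cmax inC wp[OF uv] in \<open>auto simp: card_insert_if\<close>)
    have ba: "{b,a} \<in> E" using ab by (simp add: insert_commute)
    have p2: "w{v,u}+w{u,b}+w{b,a} \<le> gamma E w {v,u,b} + gamma E w {u,b,a}"
      using path[OF d1(2) vu True ba] .
    have "{u,b,a} = {u,a,b}" "{b,a} = {a,b}" "{v,u} = {u,v}" by auto
    hence p2': "w{u,v}+w{u,b}+w{a,b} \<le> gamma E w {v,u,b} + gamma E w {u,a,b}" using p2 by simp
    have p1': "w{u,v}+w{u,a}+w{a,b} \<le> gamma E w {v,u,a} + gamma E w {u,a,b}"
      using p1 \<open>{v,u} = {u,v}\<close> by simp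
    have "m = w{u,a} \<or> m = w{a,b} \<or> m = w{u,b}" unfolding m_def by linarith
    thus False using p1' p2' g1 g2 g3 pa pb by linarith
  next
    case False
    define m where "m = max (w{u,a}) (w{a,b})"
    have g2: "gamma E w {u,a,b} \<le> m"
    proof (rule gamma3)
      fix e assume "e \<in> E" "e \<subseteq> {u,a,b}"
      hence "e = {u,a} \<or> e = {a,b}" using sub3 False by blast
      thus "w e \<le> m" unfolding m_def by auto
    qed (use pa in \<open>auto simp: card_insert_if m_def max_def\<close>)
    have p1': "w{u,v}+w{u,a}+w{a,b} \<le> gamma E w {v,u,a} + gamma E w {u,a,b}"
      using p1 by (simp add: insert_commute)
    have "m = w{u,a} \<or> m = w{a,b}" unfolding m_def by linarith
    thus False using p1' g1 g2 pa by linarith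
  qed
qed


lemma nec:
  assumes cV: "c \<in> V" and Cd: "C = component E c" and c2: "2 \<le> card C"
  shows "\<exists>u v. double_star_centers E C u v \<and> dominant_pair E w u v"
proof -
  have cl: "b \<in> C" if "a \<in> C" "{a,b} \<in> E" for a b
    using that unfolding Cd component_def adj_def by (auto intro: rtranclp.rtrancl_into_rtrancl)
  have cC: "c \<in> C" unfolding Cd component_def by simp
  have "C \<noteq> {c}" using c2 by auto
  then obtain y where y: "y \<in> C" "y \<noteq> c" using cC by blast
  hence "(adj E)\<^sup>*\<^sup>* c y" unfolding Cd component_def by simp
  then obtain z where "adj E c z" using y(2) by (metis converse_rtranclpE)
  hence cz: "{c,z} \<in> E" unfolding adj_def .
  define Ec where "Ec = {e\<in>E. e \<subseteq> C}"
  have fEc: "finite Ec" unfolding Ec_def using finE by simp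
  have "{c,z} \<in> Ec" unfolding Ec_def using cz cC cl by auto
  hence neEc: "Ec \<noteq> {}" by blast
  define mx where "mx = Max (w ` Ec)"
  have "mx \<in> w ` Ec" unfolding mx_def using fEc neEc by (intro Max_in) auto
  then obtain e0 where e0: "e0 \<in> Ec" "w e0 = mx" by auto
  have emax: "w e \<le> w e0" if "e \<in> E" "e \<subseteq> C" for e
    using that e0 fEc unfolding mx_def Ec_def by (auto intro: Max_ge)
  obtain u v where uv0: "u \<noteq> v" "e0 = {u,v}" using e0(1) unfolding Ec_def by (auto elim: edgeE)
  have uvE: "{u,v} \<in> E" and uC: "u \<in> C" and vC: "v \<in> C" using e0(1) uv0 unfolding Ec_def by auto
  have Cmax: "w e \<le> w{u,v}" if "e \<in> E" "e \<subseteq> C" for e using emax that uv0 by simp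
  have Cmax': "w e \<le> w{v,u}" if "e \<in> E" "e \<subseteq> C" for e using Cmax that by (simp add: insert_commute)
  have vuE: "{v,u} \<in> E" using uvE by (simp add: insert_commute)
  have KK: "b \<in> {u,v}" if "a \<in> C" "a \<notin> {u,v}" "{u,a} \<in> E \<or> {v,a} \<in> E" "{a,b} \<in> E" for a b
  proof -
    have bC: "b \<in> C" using cl that by blast
    show ?thesis
    proof (cases "{u,a} \<in> E")
      case True thus ?thesis using K[OF uvE Cmax uC vC that(1) bC that(2) True that(4)] by blast
    next
      case False
      hence "{v,a} \<in> E" using that by blast
      thus ?thesis using K[OF vuE Cmax' vC uC that(1) bC _ _ that(4)] that(2) by blast
    qed
  qed
  have symr: "(adj E)\<^sup>*\<^sup>* q p" if "(adj E)\<^sup>*\<^sup>* p q" for p q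
    using that
  proof (induction rule: rtranclp_induct)
    case base thus ?case by simp
  next
    case (step y z)
    have "adj E z y" using step(2) unfolding adj_def by (simp add: insert_commute)
    thus ?case using step(3) by (rule converse_rtranclp_into_rtranclp)
  qed
  have uc: "(adj E)\<^sup>*\<^sup>* u c" using uC symr unfolding Cd component_def by auto
  have N1: "y \<in> {u,v} \<or> {u,y} \<in> E \<or> {v,y} \<in> E" if "(adj E)\<^sup>*\<^sup>* u y" for y
    using that
  proof (induction rule: rtranclp_induct)
    case base thus ?case by simp
  next
    case (step y z)
    have yz: "{y,z} \<in> E" using step(2) unfolding adj_def .
    have yC: "y \<in> C" using step(1) uC unfolding Cd component_def by (auto intro: rtranclp_trans)
    show ?case
    proof (cases "y \<in> {u,v}")
      case True thus ?thesis using yz by auto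
    next
      case False thus ?thesis using KK[OF yC False _ yz] step(3) by blast
    qed
  qed
  have N: "y \<in> {u,v} \<or> {u,y} \<in> E \<or> {v,y} \<in> E" if "y \<in> C" for y
    using N1 that uc unfolding Cd component_def by (auto intro: rtranclp_trans)
  have ds: "double_star_centers E C u v"
    unfolding double_star_centers_def
  proof (intro conjI ballI impI)
    fix e assume e: "e \<in> E" "e \<subseteq> C"
    then obtain a b where ab: "e = {a,b}" by (auto elim: edgeE)
    show "u \<in> e \<or> v \<in> e"
    proof (cases "a \<in> {u,v}")
      case True thus ?thesis using ab by auto
    next
      case False
      have aC: "a \<in> C" using e ab by auto
      show ?thesis using KK[OF aC False _] N[OF aC] False e ab by auto
    qed
  next
    fix i assume "i \<in> C - {u,v}"
    thus "{u, i} \<in> E \<or> {v, i} \<in> E" using N by blast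
  qed (use uC vC uv0 uvE in auto)
  have g3: "gamma E w {p,q,r} \<le> w{u,v}" if "p \<in> C" "q \<in> C" "r \<in> C" for p q r
    by (rule gamma3) (use Cmax that wp[OF uvE] in \<open>auto simp: card_insert_if\<close>)
  have dp: "dominant_pair E w u v"
    unfolding dominant_pair_def
  proof (intro conjI allI impI)
    fix u' v' assume h: "{u, u'} \<in> E \<and> {u, u'} \<noteq> {u, v} \<and> {v, v'} \<in> E \<and> {v, v'} \<noteq> {u, v}"
    have u'C: "u' \<in> C" and v'C: "v' \<in> C" using h cl uC vC by blast+
    have n: "u' \<noteq> u" "v' \<noteq> v" using h edge_ne by blast+
    have n2: "u' \<noteq> v" "v' \<noteq> u" using h by (auto simp: insert_commute)
    show "w {u, u'} + w {v, v'} \<le> w {u, v}"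
    proof (cases "u' = v'")
      case True
      have "w{u,v}+w{v,u'}+w{u,u'} \<le> 2 * gamma E w {u,v,u'}"
        using tri[OF uvE] h True by blast
      thus ?thesis using g3[OF uC vC u'C] True by simp
    next
      case False
      have d: "distinct [u',u,v,v']" using n n2 False uv0 by auto
      have "w{u',u}+w{u,v}+w{v,v'} \<le> gamma E w {u',u,v} + gamma E w {u,v,v'}"
        using path[OF d _ uvE] h by (simp add: insert_commute)
      moreover have "{u',u} = {u,u'}" by auto
      ultimately show ?thesis using g3[OF u'C uC vC] g3[OF uC vC v'C] by simp
    qed
  next
    fix u' assume "\<forall>v'. {v, v'} \<in> E \<longrightarrow> {v, v'} = {u, v}" "{u, u'} \<in> E \<and> {u, u'} \<noteq> {u, v}"
    thus "w {u, u'} \<le> w {u, v}" using Cmax cl uC by auto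
  next
    fix v' assume "\<forall>u'. {u, u'} \<in> E \<longrightarrow> {u, u'} = {u, v}" "{v, v'} \<in> E \<and> {v, v'} \<noteq> {u, v}"
    thus "w {v, v'} \<le> w {u, v}" using Cmax cl vC by auto
  qed (use uvE in auto)
  show ?thesis using ds dp by blast
qed

end

lemma comp_refl: "i \<in> component E i" by (simp add: component_def)

lemma rt_sym: "(adj E)\<^sup>*\<^sup>* p q \<Longrightarrow> (adj E)\<^sup>*\<^sup>* q p"
proof (induction rule: rtranclp_induct)
  case base thus ?case by simp
next
  case (step y z)
  have "adj E z y" using step(2) unfolding adj_def by (simp add: insert_commute)
  thus ?case using step(3) by (rule converse_rtranclp_into_rtranclp)
qed

lemma comp_eq: "j \<in> component E i \<Longrightarrow> component E j = component E i"
  unfolding component_def using rt_sym by (auto intro: rtranclp_trans)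

lemma comp_edge: "{a,b} \<in> E \<Longrightarrow> b \<in> component E a"
  unfolding component_def adj_def by auto

lemma comp_V: assumes "i \<in> V" shows "component E i \<subseteq> V"
proof
  fix y assume "y \<in> component E i"
  hence "(adj E)\<^sup>*\<^sup>* i y" by (simp add: component_def)
  thus "y \<in> V"
    by (induction rule: rtranclp_induct) (use assms edge_V in \<open>auto simp: adj_def\<close>)
qed

lemma good_edge: assumes "{a,b} \<in> E" shows "2 \<le> card (component E a)"
proof -
  have "a \<in> V" using edge_V assms by blast
  hence f: "finite (component E a)" using comp_V finV finite_subset by blast
  have "{a,b} \<subseteq> component E a" using comp_refl comp_edge assms by blast
  hence "card {a,b} \<le> card (component E a)" using f by (rule card_mono[rotated])
  thus ?thesis using edge_ne assms by simp
qed

definition ctr :: "'a set \<Rightarrow> 'a \<times> 'a" where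
  "ctr C = (SOME p. double_star_centers E C (fst p) (snd p) \<and> dominant_pair E w (fst p) (snd p))"
definition sig :: "'a \<Rightarrow> 'a \<Rightarrow> real" where
  "sig u v = Max (insert 0 (w ` {e\<in>E. u \<in> e \<and> e \<noteq> {u,v}}))"
definition mw :: "'a \<Rightarrow> 'a set \<Rightarrow> real" where
  "mw i S = Max (insert 0 (w ` {e\<in>E. i \<in> e \<and> e \<subseteq> S}))"
definition cu :: "'a \<Rightarrow> 'a" where "cu i = fst (ctr (component E i))"
definition cv :: "'a \<Rightarrow> 'a" where "cv i = snd (ctr (component E i))"
definition good :: "'a \<Rightarrow> bool" where "good i \<longleftrightarrow> 2 \<le> card (component E i)"
definition alloc :: "'a set \<Rightarrow> 'a \<Rightarrow> real" where
  "alloc S i =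
    (if good i \<and> i = cu i then (if cv i \<in> S then sig i (cv i) else mw i S)
     else if good i \<and> i = cv i then (if cu i \<in> S then w{cu i, i} - sig (cu i) i else mw i S)
     else 0)"

lemma sig_ge: "e \<in> E \<Longrightarrow> u \<in> e \<Longrightarrow> e \<noteq> {u,v} \<Longrightarrow> w e \<le> sig u v"
  unfolding sig_def using finE by (intro Max_ge) auto
lemma sig_nn: "0 \<le> sig u v"
  unfolding sig_def using finE by (intro Max_ge) auto
lemma sig_le: "0 \<le> c \<Longrightarrow> (\<And>e. e \<in> E \<Longrightarrow> u \<in> e \<Longrightarrow> e \<noteq> {u,v} \<Longrightarrow> w e \<le> c) \<Longrightarrow> sig u v \<le> c"
  unfolding sig_def using finE by (subst Max_le_iff) auto
lemma mw_ge: "e \<in> E \<Longrightarrow> i \<in> e \<Longrightarrow> e \<subseteq> S \<Longrightarrow> w e \<le> mw i S"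
  unfolding mw_def using finE by (intro Max_ge) auto
lemma mw_nn: "0 \<le> mw i S"
  unfolding mw_def using finE by (intro Max_ge) auto
lemma mw_le: "0 \<le> c \<Longrightarrow> (\<And>e. e \<in> E \<Longrightarrow> i \<in> e \<Longrightarrow> e \<subseteq> S \<Longrightarrow> w e \<le> c) \<Longrightarrow> mw i S \<le> c"
  unfolding mw_def using finE by (subst Max_le_iff) auto
lemma mw_mono: "S \<subseteq> T \<Longrightarrow> mw i S \<le> mw i T"
  unfolding mw_def using finE by (intro Max_mono) auto
lemma mw_in: "mw i S = 0 \<or> (\<exists>e. e \<in> E \<and> i \<in> e \<and> e \<subseteq> S \<and> w e = mw i S)"
proof -
  have "mw i S \<in> insert 0 (w ` {e\<in>E. i \<in> e \<and> e \<subseteq> S})"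
    unfolding mw_def using finE by (intro Max_in) auto
  thus ?thesis by auto
qed

lemma edge_at: "e \<in> E \<Longrightarrow> u \<in> e \<Longrightarrow> \<exists>u'. e = {u,u'}"
  by (erule edgeE) auto

lemma dom_sig:
  assumes dp: "dominant_pair E w u v"
  shows "sig u v + sig v u \<le> w {u,v}"
proof -
  define A where "A = {e\<in>E. u \<in> e \<and> e \<noteq> {u,v}}"
  define B where "B = {e\<in>E. v \<in> e \<and> e \<noteq> {v,u}}"
  have uvE: "{u,v} \<in> E" using dp unfolding dominant_pair_def by blast
  have vu: "{v,u} = {u,v}" by auto
  have key: "a + b \<le> w{u,v}" if a: "a \<in> insert 0 (w ` A)" and b: "b \<in> insert 0 (w ` B)" for a b
  proof -
    have cA: "\<exists>u'. {u,u'} \<in> E \<and> {u,u'} \<noteq> {u,v} \<and> w{u,u'} = a" if "a \<noteq> 0"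
      using a that edge_at unfolding A_def by fastforce
    have cB: "\<exists>v'. {v,v'} \<in> E \<and> {v,v'} \<noteq> {u,v} \<and> w{v,v'} = b" if "b \<noteq> 0"
      using b that edge_at vu unfolding B_def by fastforce
    have D1: "w{u,u'} + w{v,v'} \<le> w{u,v}" if "{u,u'} \<in> E \<and> {u,u'} \<noteq> {u,v} \<and> {v,v'} \<in> E \<and> {v,v'} \<noteq> {u,v}" for u' v'
      using dp that unfolding dominant_pair_def by blast
    have D2: "w{u,u'} \<le> w{u,v}" if "\<forall>v'. {v,v'} \<in> E \<longrightarrow> {v,v'} = {u,v}" "{u,u'} \<in> E \<and> {u,u'} \<noteq> {u,v}" for u'
      using dp that unfolding dominant_pair_def by blast
    have D3: "w{v,v'} \<le> w{u,v}" if "\<forall>u'. {u,u'} \<in> E \<longrightarrow> {u,u'} = {u,v}" "{v,v'} \<in> E \<and> {v,v'} \<noteq> {u,v}" for v'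
      using dp that unfolding dominant_pair_def by blast
    have wuv: "0 < w{u,v}" using wp uvE by blast
    show ?thesis
    proof (cases "a = 0")
      case a0: True
      show ?thesis
      proof (cases "b = 0")
        case True thus ?thesis using a0 wuv by simp
      next
        case False
        then obtain v' where v': "{v,v'} \<in> E" "{v,v'} \<noteq> {u,v}" "w{v,v'} = b" using cB by blast
        show ?thesis
        proof (cases "\<forall>u'. {u,u'} \<in> E \<longrightarrow> {u,u'} = {u,v}")
          case True thus ?thesis using D3[OF True] v' a0 by auto
        next
          case False
          then obtain u' where "{u,u'} \<in> E" "{u,u'} \<noteq> {u,v}" by blast
          thus ?thesis using D1[of u' v'] v' a0 wp[of "{u,u'}"] by auto
        qed
      qed
    next
      case a1: False
      then obtain u' where u': "{u,u'} \<in> E" "{u,u'} \<noteq> {u,v}" "w{u,u'} = a" using cA by blast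
      show ?thesis
      proof (cases "b = 0")
        case b0: True
        show ?thesis
        proof (cases "\<forall>v'. {v,v'} \<in> E \<longrightarrow> {v,v'} = {u,v}")
          case True thus ?thesis using D2[OF True] u' b0 by auto
        next
          case False
          then obtain v' where "{v,v'} \<in> E" "{v,v'} \<noteq> {u,v}" by blast
          thus ?thesis using D1[of u' v'] u' b0 wp[of "{v,v'}"] by auto
        qed
      next
        case False
        then obtain v' where v': "{v,v'} \<in> E" "{v,v'} \<noteq> {u,v}" "w{v,v'} = b" using cB by blast
        thus ?thesis using D1[of u' v'] u' by auto
      qed
    qed
  qed
  have "sig u v \<in> insert 0 (w ` A)" unfolding sig_def A_def using finE by (intro Max_in) auto
  moreover have "sig v u \<in> insert 0 (w ` B)" unfolding sig_def B_def using finE by (intro Max_in) auto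
  ultimately show ?thesis using key by blast
qed

end

locale mg2 = mg +
  assumes H: "\<forall>C\<in>components V E. card C \<ge> 2 \<longrightarrow>
       (\<exists>u v. double_star_centers E C u v \<and> dominant_pair E w u v)"
begin

lemma ctr_ok:
  assumes "i \<in> V" "good i"
  shows "double_star_centers E (component E i) (cu i) (cv i) \<and> dominant_pair E w (cu i) (cv i)"
proof -
  have "component E i \<in> components V E" using assms by (simp add: components_def)
  then obtain u v where "double_star_centers E (component E i) u v \<and> dominant_pair E w u v"
    using H assms(2) unfolding good_def by blast
  hence "double_star_centers E (component E i) (fst (u,v)) (snd (u,v)) \<and> dominant_pair E w (fst (u,v)) (snd (u,v))" by simp
  hence "double_star_centers E (component E i) (fst (ctr (component E i))) (snd (ctr (component E i)))
     \<and> dominant_pair E w (fst (ctr (component E i))) (snd (ctr (component E i)))"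
    unfolding ctr_def by (rule someI)
  thus ?thesis unfolding cu_def cv_def .
qed

lemma cen:
  assumes "i \<in> V" "good i"
  shows "cu i \<in> component E i" "cv i \<in> component E i" "cu i \<noteq> cv i" "{cu i, cv i} \<in> E"
    "dominant_pair E w (cu i) (cv i)" "double_star_centers E (component E i) (cu i) (cv i)"
    "good (cu i)" "good (cv i)" "cu (cu i) = cu i" "cv (cu i) = cv i" "cu (cv i) = cu i" "cv (cv i) = cv i"
    "cu i \<in> V" "cv i \<in> V"
proof -
  note ok = ctr_ok[OF assms]
  show 1: "cu i \<in> component E i" "cv i \<in> component E i" "cu i \<noteq> cv i" "{cu i, cv i} \<in> E"
    using ok unfolding double_star_centers_def by auto
  show "dominant_pair E w (cu i) (cv i)" "double_star_centers E (component E i) (cu i) (cv i)" using ok by auto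
  have e1: "component E (cu i) = component E i" "component E (cv i) = component E i"
    using comp_eq 1 by auto
  thus "good (cu i)" "good (cv i)" "cu (cu i) = cu i" "cv (cu i) = cv i" "cu (cv i) = cu i" "cv (cv i) = cv i"
    using assms(2) unfolding good_def cu_def cv_def by auto
  show "cu i \<in> V" "cv i \<in> V" using 1 comp_V assms by auto
qed

lemma alloc_u: assumes "i \<in> V" "good i"
  shows "alloc S (cu i) = (if cv i \<in> S then sig (cu i) (cv i) else mw (cu i) S)"
  using cen[OF assms] unfolding alloc_def by simp

lemma alloc_v: assumes "i \<in> V" "good i"
  shows "alloc S (cv i) = (if cu i \<in> S then w{cu i, cv i} - sig (cu i) (cv i) else mw (cv i) S)"
  using cen[OF assms] unfolding alloc_def by auto

lemma alloc_0: "\<not> good i \<or> i \<notin> {cu i, cv i} \<Longrightarrow> alloc S i = 0"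
  unfolding alloc_def by auto

lemma vcases:
  assumes "j \<in> V"
  obtains (z) "\<not> good j \<or> j \<notin> {cu j, cv j}"
    | (u) "good j" "j = cu j" | (v) "good j" "j = cv j"
  by blast

lemma vu_bound: assumes "i \<in> V" "good i"
  shows "sig (cv i) (cu i) \<le> w{cu i, cv i} - sig (cu i) (cv i)"
  using dom_sig[OF cen(5)[OF assms]] by linarith

lemma alloc_nn: assumes "j \<in> V" shows "0 \<le> alloc S j"
proof -
  consider (z) "\<not> good j \<or> j \<notin> {cu j, cv j}" | (u) "good j" "j = cu j" | (v) "good j" "j = cv j" by blast
  then show ?thesis
  proof cases
  case z thus ?thesis using alloc_0 by simp
next
  case u thus ?thesis using alloc_u[OF assms u(1), of S] sig_nn mw_nn by simp
next
  case v thus ?thesis using alloc_v[OF assms v(1), of S] vu_bound[OF assms v(1)] sig_nn[of "cv j" "cu j"] mw_nn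
    by (auto split: if_splits)
qed
qed

lemma alloc_mono: assumes "S \<subseteq> T" "T \<subseteq> V" "j \<in> S" shows "alloc S j \<le> alloc T j"
proof -
  have jV: "j \<in> V" using assms by auto
  consider (z) "\<not> good j \<or> j \<notin> {cu j, cv j}" | (u) "good j" "j = cu j" | (v) "good j" "j = cv j" by blast
  then show ?thesis
  proof cases
    case z thus ?thesis using alloc_0 by simp
  next
    case u
    have k: "mw j S \<le> sig j (cv j)" if "cv j \<notin> S"
    proof (rule mw_le[OF sig_nn])
      fix e assume e: "e \<in> E" "j \<in> e" "e \<subseteq> S"
      hence "e \<noteq> {j, cv j}" using that by auto
      thus "w e \<le> sig j (cv j)" using sig_ge e by blast
    qed
    show ?thesis using alloc_u[OF jV u(1), of S] alloc_u[OF jV u(1), of T] u assms k mw_mono[OF assms(1)]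
      by (auto split: if_splits)
  next
    case v
    have k: "mw j S \<le> sig j (cu j)" if "cu j \<notin> S"
    proof (rule mw_le[OF sig_nn])
      fix e assume e: "e \<in> E" "j \<in> e" "e \<subseteq> S"
      hence "e \<noteq> {j, cu j}" using that by auto
      thus "w e \<le> sig j (cu j)" using sig_ge e by blast
    qed
    have vb: "sig (cv j) (cu j) \<le> w{cu j, cv j} - sig (cu j) (cv j)" using vu_bound[OF jV v(1)] .
    show ?thesis using alloc_v[OF jV v(1), of S] alloc_v[OF jV v(1), of T] v assms k vb mw_mono[OF assms(1)]
      by (auto split: if_splits)
  qed
qed


lemma EB: assumes "e \<in> E" "e \<subseteq> S" "S \<subseteq> V" shows "w e \<le> (\<Sum>i\<in>e. alloc S i)"
proof -
  obtain a b where ab: "a\<noteq>b" "a\<in>V" "b\<in>V" "e={a,b}" using assms(1) by (rule edgeE)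
  have ga: "good a" using good_edge assms(1) ab unfolding good_def by simp
  note c = cen[OF ab(2) ga]
  have eC: "e \<subseteq> component E a" using comp_refl comp_edge assms(1) ab by auto
  have uv: "cu a \<in> e \<or> cv a \<in> e" using c(6) eC assms(1) unfolding double_star_centers_def by blast
  have nn: "\<And>x. x \<in> e \<Longrightarrow> 0 \<le> alloc S x" using alloc_nn assms by blast
  have fe: "finite e" using ab by simp
  have le: "alloc S y \<le> (\<Sum>i\<in>e. alloc S i)" if "y \<in> e" for y
    by (rule member_le_sum[OF that]) (use nn fe in auto)
  show ?thesis
  proof (cases "e = {cu a, cv a}")
    case True
    have "(\<Sum>i\<in>e. alloc S i) = alloc S (cu a) + alloc S (cv a)" using True c(3) by simp
    also have "\<dots> = w e" using alloc_u[OF ab(2) ga, of S] alloc_v[OF ab(2) ga, of S] True assms(2) by simp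
    finally show ?thesis by simp
  next
    case False
    show ?thesis
    proof (cases "cu a \<in> e")
      case True
      have "w e \<le> alloc S (cu a)"
        using alloc_u[OF ab(2) ga, of S] sig_ge[OF assms(1) True False] mw_ge[OF assms(1) True assms(2)] by simp
      thus ?thesis using le[OF True] by linarith
    next
      case nu: False
      hence vin: "cv a \<in> e" using uv by blast
      have F: "e \<noteq> {cv a, cu a}" using False by (simp add: insert_commute)
      have "w e \<le> alloc S (cv a)"
        using alloc_v[OF ab(2) ga, of S] sig_ge[OF assms(1) vin F] mw_ge[OF assms(1) vin assms(2)]
          vu_bound[OF ab(2) ga] by auto
      thus ?thesis using le[OF vin] by linarith
    qed
  qed
qed

lemma eff_ge: assumes "S \<subseteq> V" shows "gamma E w S \<le> (\<Sum>i\<in>S. alloc S i)"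
proof (rule gamma_le)
  fix M assume M: "matching_in E S M"
  have ME: "M \<subseteq> E" and MS: "\<And>e. e \<in> M \<Longrightarrow> e \<subseteq> S"
    and Md: "\<And>e f. e \<in> M \<Longrightarrow> f \<in> M \<Longrightarrow> e \<noteq> f \<Longrightarrow> e \<inter> f = {}"
    using M unfolding matching_in_def by auto
  have fM: "finite M" using ME finE finite_subset by blast
  have fe: "\<And>e. e \<in> M \<Longrightarrow> finite e" using ME EsubV finV finite_subset by blast
  have "sum w M \<le> (\<Sum>e\<in>M. \<Sum>i\<in>e. alloc S i)"
    by (rule sum_mono) (use EB ME MS assms in blast)
  also have "\<dots> = (\<Sum>i\<in>\<Union>M. alloc S i)"
    using sum.Union_disjoint[of M "alloc S"] fe Md by (simp add: comp_def)
  also have "\<dots> \<le> (\<Sum>i\<in>S. alloc S i)"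
  proof (rule sum_mono2)
    show "finite S" using assms finV finite_subset by blast
    show "\<Union>M \<subseteq> S" using MS by blast
    show "\<And>b. b \<in> S - \<Union>M \<Longrightarrow> 0 \<le> alloc S b" using alloc_nn assms by blast
  qed
  finally show "sum w M \<le> (\<Sum>i\<in>S. alloc S i)" .
qed


lemma eff_le: assumes SV: "S \<subseteq> V" shows "(\<Sum>i\<in>S. alloc S i) \<le> gamma E w S"
proof -
  define D where "D = {i\<in>S. alloc S i \<noteq> 0}"
  define g where "g i = (if cu i \<in> S \<and> cv i \<in> S then {cu i, cv i}
      else (SOME e. e \<in> E \<and> i \<in> e \<and> e \<subseteq> S \<and> w e = mw i S))" for i
  have fS: "finite S" using SV finV finite_subset by blast
  have fD: "finite D" using fS unfolding D_def by simp
  have DS: "D \<subseteq> S" unfolding D_def by auto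
  have Dc: "i \<in> V \<and> good i \<and> (i = cu i \<or> i = cv i)" if "i \<in> D" for i
    using that alloc_0[of i S] SV unfolding D_def by auto
  have ns: "alloc S i = mw i S" if "i \<in> D" "\<not> (cu i \<in> S \<and> cv i \<in> S)" for i
  proof -
    have iS: "i \<in> S" using that DS by auto
    from Dc[OF that(1)] consider "i \<in> V" "good i" "i = cu i" | "i \<in> V" "good i" "i = cv i" by blast
    thus ?thesis
    proof cases
      case 1 thus ?thesis using alloc_u[OF 1(1,2), of S] that iS by (metis (full_types))
    next
      case 2 thus ?thesis using alloc_v[OF 2(1,2), of S] that iS by (metis (full_types))
    qed
  qed
  have gp: "g i \<in> E \<and> g i \<subseteq> S \<and> i \<in> g i \<and> g i \<subseteq> component E i \<and>
     (\<not> (cu i \<in> S \<and> cv i \<in> S) \<longrightarrow> w (g i) = alloc S i)" if iD: "i \<in> D" for i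
  proof (cases "cu i \<in> S \<and> cv i \<in> S")
    case True
    have c: "i \<in> V" "good i" "i = cu i \<or> i = cv i" using Dc[OF iD] by auto
    note cc = cen[OF c(1,2)]
    show ?thesis using True cc(1,2,4) c(3) unfolding g_def by auto
  next
    case False
    have a: "alloc S i = mw i S" using ns[OF iD False] .
    hence "mw i S \<noteq> 0" using iD unfolding D_def by auto
    hence ex: "\<exists>e. e \<in> E \<and> i \<in> e \<and> e \<subseteq> S \<and> w e = mw i S" using mw_in by blast
    have gi: "g i = (SOME e. e \<in> E \<and> i \<in> e \<and> e \<subseteq> S \<and> w e = mw i S)" using False by (auto simp: g_def)
    have P: "g i \<in> E \<and> i \<in> g i \<and> g i \<subseteq> S \<and> w (g i) = mw i S"
      unfolding gi by (rule someI_ex[OF ex])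
    then obtain i' where "g i = {i,i'}" using edge_at by blast
    hence "g i \<subseteq> component E i" using P comp_refl comp_edge by auto
    thus ?thesis using P a False by auto
  qed
  have gC: "component E z = component E i" if "i \<in> D" "z \<in> g i" for i z
    using gp[OF that(1)] that(2) comp_eq by blast
  have same: "g i = g j \<or> i = j" if ij: "i \<in> D" "j \<in> D" "g i \<inter> g j \<noteq> {}" for i j
  proof -
    obtain z where z: "z \<in> g i" "z \<in> g j" using ij(3) by blast
    have ce: "component E i = component E j" using gC[OF ij(1) z(1)] gC[OF ij(2) z(2)] by simp
    hence cc: "cu i = cu j" "cv i = cv j" unfolding cu_def cv_def by auto
    show ?thesis
    proof (cases "cu i \<in> S \<and> cv i \<in> S")
      case True thus ?thesis using cc unfolding g_def by simp
    next
      case False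
      have "i \<in> S" "j \<in> S" using ij DS by auto
      thus ?thesis using Dc[OF ij(1)] Dc[OF ij(2)] cc False by auto
    qed
  qed
  have match: "matching_in E S (g ` D)"
    unfolding matching_in_def using gp same by blast
  have nnS: "\<And>x. x \<in> S \<Longrightarrow> 0 \<le> alloc S x" using alloc_nn SV by blast
  have "(\<Sum>i\<in>S. alloc S i) = (\<Sum>i\<in>D. alloc S i)"
    by (rule sum.mono_neutral_right[OF fS DS]) (auto simp: D_def)
  also have "\<dots> = (\<Sum>e\<in>g ` D. \<Sum>x\<in>{x\<in>D. g x = e}. alloc S x)"
    by (rule sum.image_gen[OF fD])
  also have "\<dots> \<le> (\<Sum>e\<in>g ` D. w e)"
  proof (rule sum_mono)
    fix e assume "e \<in> g ` D"
    then obtain i0 where i0: "i0 \<in> D" "e = g i0" by blast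
    show "(\<Sum>x\<in>{x\<in>D. g x = e}. alloc S x) \<le> w e"
    proof (cases "cu i0 \<in> S \<and> cv i0 \<in> S")
      case True
      have c: "i0 \<in> V" "good i0" using Dc[OF i0(1)] by auto
      note cc = cen[OF c]
      have eq: "e = {cu i0, cv i0}" using True i0 unfolding g_def by simp
      have sub: "{x\<in>D. g x = e} \<subseteq> {cu i0, cv i0}" using gp eq by blast
      have "(\<Sum>x\<in>{x\<in>D. g x = e}. alloc S x) \<le> (\<Sum>x\<in>{cu i0, cv i0}. alloc S x)"
        by (rule sum_mono2) (use sub True nnS in auto)
      also have "\<dots> = alloc S (cu i0) + alloc S (cv i0)" using cc(3) by simp
      also have "\<dots> = w e" using alloc_u[OF c, of S] alloc_v[OF c, of S] True eq by simp
      finally show ?thesis .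
    next
      case False
      have "{x\<in>D. g x = e} = {i0}"
      proof -
        have "x = i0" if "x \<in> D" "g x = g i0" for x
        proof -
          have "g x \<inter> g i0 \<noteq> {}" using gp[OF that(1)] that(2) by auto
          have "i0 \<in> S" "x \<in> S" using that i0 DS by auto
          have xc: "x \<in> g i0" using gp[OF that(1)] that(2) by auto
          have ce: "component E x = component E i0" using gC[OF i0(1) xc] .
          hence cc: "cu x = cu i0" "cv x = cv i0" unfolding cu_def cv_def by auto
          show ?thesis using Dc[OF that(1)] Dc[OF i0(1)] cc False \<open>i0 \<in> S\<close> \<open>x \<in> S\<close> by auto
        qed
        thus ?thesis using i0 by auto
      qed
      thus ?thesis using gp[OF i0(1)] False i0(2) by simp
    qed
  qed
  also have "\<dots> \<le> gamma E w S" using gamma_ge[OF match] .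
  finally show ?thesis .
qed

lemma pmas: "is_PMAS V E w alloc"
  unfolding is_PMAS_def
proof (intro conjI allI impI)
  fix S assume "S \<noteq> {} \<and> S \<subseteq> V"
  thus "(\<Sum>i\<in>S. alloc S i) = gamma E w S" using eff_le eff_ge by (meson order_antisym)
next
  fix S T i assume "S \<noteq> {} \<and> S \<subseteq> T \<and> T \<subseteq> V \<and> i \<in> S"
  thus "alloc S i \<le> alloc T i" using alloc_mono by blast
qed

end

theorem mainTheorem14:
  fixes V :: "'a set" and E :: "'a set set" and w :: "'a set \<Rightarrow> real"
  assumes "simple_graph V E"
    and "\<forall>e\<in>E. w e > 0"
  shows "population_monotonic V E w \<longleftrightarrow>
    (\<forall>C\<in>components V E. card C \<ge> 2 \<longrightarrow>
       (\<exists>u v. double_star_centers E C u v \<and> dominant_pair E w u v))"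
proof -
  interpret mg V E w using assms by unfold_locales
  show ?thesis
  proof
    assume "population_monotonic V E w"
    then obtain x where x: "is_PMAS V E w x" by (auto simp: population_monotonic_def)
    show "\<forall>C\<in>components V E. card C \<ge> 2 \<longrightarrow>
       (\<exists>u v. double_star_centers E C u v \<and> dominant_pair E w u v)"
    proof (intro ballI impI)
      fix C assume "C \<in> components V E" "2 \<le> card C"
      then obtain c where "c \<in> V" "C = component E c" by (auto simp: components_def)
      thus "\<exists>u v. double_star_centers E C u v \<and> dominant_pair E w u v"
        using nec[OF x] \<open>2 \<le> card C\<close> by blast
    qed
  next
    assume H: "\<forall>C\<in>components V E. card C \<ge> 2 \<longrightarrow>
       (\<exists>u v. double_star_centers E C u v \<and> dominant_pair E w u v)"
    interpret m2: mg2 V E w by unfold_locales (rule H)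
    show "population_monotonic V E w"
      using m2.pmas by (auto simp: population_monotonic_def)
  qed
qed

end
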